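(* Let $A$ be an abelian surface over a finite field $\mathbb{F}_q$ of characteristic $p$, with Frobenius characteristic polynomial $\chi_{A,q}(T) = T^4 + a_1 T^3 + a_2 T^2 + a_1 q T + q^2$. Let $\ell \neq p$ be a prime, let $r$ be the order of the Frobenius endomorphism $\varphi$ on $A[\ell]$, and assume $\gcd(\ell, r) = 1$. Then there exist $r$-th roots of unity $\zeta_1,\zeta_2 \in \overline{\mathbb{F}}_\ell$ with $\operatorname{lcm}(\operatorname{ord}(\zeta_1),\operatorname{ord}(\zeta_2)) = r$ if $r$ is odd, and $\operatorname{lcm}(\operatorname{ord}(\zeta_1),\operatorname{ord}(\zeta_2)) \in \{r, r/2\}$ if $r$ is even, such that, with $\eta_j = \zeta_j + \zeta_j^{-1} + 2$ ($j=1,2$), $$a_1^2 \equiv (\sqrt{\eta_1} \pm \sqrt{\eta_2})^2\, q \pmod{\ell} \quad\text{and}\quad (a_2 - 2q)^2 \equiv \eta_1 \eta_2 q^2 \pmod{\ell},$$ where the first congruence means that there exist square roots $u_1, u_2 \in \overline{\mathbb{F}}_\ell$ of $\eta_1, \eta_2$ respectively with $a_1^2 \equiv (u_1 + u_2)^2 q$.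
   Context: The order of $\varphi$ on $A[\ell]$ is defined as follows: via $A[\ell] \cong (\mathbb{Z}/\ell\mathbb{Z})^{4}$, the action of $\varphi$ on $A[\ell]$ is given by a matrix $F_\ell \in \operatorname{GL}_{4}(\mathbb{F}_\ell)$ (the reduction mod $\ell$ of the matrix of Frobenius on the Tate module), and $r$ is the smallest positive integer such that $F_\ell^r = \alpha I$ for some scalar $\alpha \in \mathbb{F}_\ell$, i.e. the order of $F_\ell$ in $\operatorname{PGL}_4(\mathbb{F}_\ell)$. Congruences between integers and elements of $\overline{\mathbb{F}}_\ell$ are understood after reducing the integers modulo $\ell$. *)

theory Defs
  imports "Jordan_Normal_Form.Char_Poly" "HOL-Computational_Algebra.Polynomial"
begin

definition frob_poly :: "int \<Rightarrow> int \<Rightarrow> int \<Rightarrow> int poly" where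
  "frob_poly q a1 a2 = [: q^2, a1 * q, a2, a1, 1 :]"

definition pgl_order :: "'a::field mat \<Rightarrow> nat" where
  "pgl_order F = (LEAST r. r > 0 \<and> (\<exists>\<alpha>. F ^\<^sub>m r = \<alpha> \<cdot>\<^sub>m 1\<^sub>m (dim_row F)))"

definition elt_ord :: "'a::field \<Rightarrow> nat" where
  "elt_ord x = (LEAST n. n > 0 \<and> x ^ n = 1)"

end

theory Submission
  imports Defs "HOL-Number_Theory.Residues"
begin

lemma CHAR_finite_prime_card:
  assumes "prime l" "card (UNIV :: 'f::field set) = l"
  shows "CHAR('f) = l"
proof -
  have "CHAR('f) dvd l" using CHAR_dvd_CARD[where 'a='f] assms by simp
  moreover have "CHAR('f) \<noteq> 1" by simp
  ultimately show ?thesis using assms(1) unfolding prime_nat_iff by blast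
qed

lemma of_nat_surj_prime_field:
  assumes "prime l" "card (UNIV :: 'f::field set) = l"
  shows "\<exists>m. of_nat m = (x::'f)"
proof -
  have C: "CHAR('f) = l" by (rule CHAR_finite_prime_card[OF assms])
  have fin: "finite (UNIV :: 'f set)" using assms(2) prime_gt_0_nat[OF assms(1)] by (intro card_ge_0_finite) simp
  have inj: "inj_on (of_nat :: nat \<Rightarrow> 'f) {..<l}"
  proof (rule inj_onI)
    fix a b assume "a \<in> {..<l}" "b \<in> {..<l}" "(of_nat a :: 'f) = of_nat b"
    then show "a = b" using of_nat_eq_iff_cong_CHAR[where 'a='f] C
      by (simp add: cong_def)
  qed
  have "card ((of_nat :: nat \<Rightarrow> 'f) ` {..<l}) = l" using card_image[OF inj] by simp
  hence "(of_nat :: nat \<Rightarrow> 'f) ` {..<l} = UNIV"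
    using fin assms(2) by (intro card_subset_eq) auto
  thus ?thesis by (metis UNIV_I imageE)
qed

definition prim_hom :: "'f::field \<Rightarrow> 'k::field" where
  "prim_hom x = of_nat (LEAST m. of_nat m = x)"

lemma prim_hom_of_nat:
  assumes "prime l" "card (UNIV :: 'f::field set) = l" "CHAR('k::field) = l"
  shows "(prim_hom (of_nat m :: 'f) :: 'k) = of_nat m"
proof -
  have C: "CHAR('f) = l" by (rule CHAR_finite_prime_card[OF assms(1,2)])
  let ?m0 = "LEAST m'. (of_nat m' :: 'f) = of_nat m"
  have "(of_nat ?m0 :: 'f) = of_nat m" by (rule LeastI[of _ m]) simp
  hence "[?m0 = m] (mod l)" using of_nat_eq_iff_cong_CHAR[where 'a='f] C by simp
  hence "(of_nat ?m0 :: 'k) = of_nat m" using of_nat_eq_iff_cong_CHAR[where 'a='k] assms(3) by simp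
  thus ?thesis unfolding prim_hom_def .
qed

lemma prim_hom_field_hom:
  assumes "prime l" "card (UNIV :: 'f::field set) = l" "CHAR('k::field) = l"
  shows "field_hom (prim_hom :: 'f \<Rightarrow> 'k)"
proof -
  note S = of_nat_surj_prime_field[OF assms(1,2)]
  note H = prim_hom_of_nat[OF assms]
  show ?thesis
  proof (unfold_locales)
    fix x y :: 'f
    obtain a b where ab: "x = of_nat a" "y = of_nat b" using S by metis
    show "(prim_hom (x + y) :: 'k) = prim_hom x + prim_hom y"
      unfolding ab of_nat_add[symmetric] H by simp
    show "(prim_hom (x * y) :: 'k) = prim_hom x * prim_hom y"
      unfolding ab of_nat_mult[symmetric] H by simp
  next
    show "(prim_hom (1::'f) :: 'k) = 1" using H[of 1] by simp
  next
    show "(prim_hom (0::'f) :: 'k) = 0" using H[of 0] by simp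
  qed
qed

definition pev :: "'a::comm_ring_1 mat \<Rightarrow> 'a poly \<Rightarrow> 'a vec \<Rightarrow> 'a vec" where
  "pev M p v = fold_coeffs (\<lambda>a w. a \<cdot>\<^sub>v v + M *\<^sub>v w) p (0\<^sub>v (dim_row M))"

lemma rowM_carrier: assumes "(M :: 'a::comm_ring_1 mat) \<in> carrier_mat n n" shows "row M i \<in> carrier_vec n"
proof -
  have "dim_col M = n" using assms by (rule carrier_matD(2))
  thus ?thesis using row_carrier[of M i] by simp
qed

lemma vec_lin1: fixes M :: "'a::comm_ring_1 mat" assumes M: "M \<in> carrier_mat n n" and c: "v \<in> carrier_vec n" "w \<in> carrier_vec n"
  "x \<in> carrier_vec n" "y \<in> carrier_vec n"
  shows "a \<cdot>\<^sub>v (v + w) + M *\<^sub>v (x + y) = (a \<cdot>\<^sub>v v + M *\<^sub>v x) + (a \<cdot>\<^sub>v w + M *\<^sub>v y)"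
proof (rule eq_vecI)
  fix i assume "i < dim_vec ((a \<cdot>\<^sub>v v + M *\<^sub>v x) + (a \<cdot>\<^sub>v w + M *\<^sub>v y))"
  hence i: "i < n" using M c by simp
  have "row M i \<bullet> (x + y) = row M i \<bullet> x + row M i \<bullet> y"
    by (rule scalar_prod_add_distrib[OF rowM_carrier[OF M] c(3,4)])
  thus "(a \<cdot>\<^sub>v (v + w) + M *\<^sub>v (x + y)) $ i = ((a \<cdot>\<^sub>v v + M *\<^sub>v x) + (a \<cdot>\<^sub>v w + M *\<^sub>v y)) $ i"
    using M c i by (simp add: ring_distribs add_ac)
qed (use M c in simp)

lemma vec_lin3: fixes M :: "'a::comm_ring_1 mat" assumes M: "M \<in> carrier_mat n n" and c: "v \<in> carrier_vec n"
  "x \<in> carrier_vec n" "y \<in> carrier_vec n"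
  shows "(a + b) \<cdot>\<^sub>v v + M *\<^sub>v (x + y) = (a \<cdot>\<^sub>v v + M *\<^sub>v x) + (b \<cdot>\<^sub>v v + M *\<^sub>v y)"
proof (rule eq_vecI)
  fix i assume "i < dim_vec ((a \<cdot>\<^sub>v v + M *\<^sub>v x) + (b \<cdot>\<^sub>v v + M *\<^sub>v y))"
  hence i: "i < n" using M c by simp
  have "row M i \<bullet> (x + y) = row M i \<bullet> x + row M i \<bullet> y"
    by (rule scalar_prod_add_distrib[OF rowM_carrier[OF M] c(2,3)])
  thus "((a + b) \<cdot>\<^sub>v v + M *\<^sub>v (x + y)) $ i = ((a \<cdot>\<^sub>v v + M *\<^sub>v x) + (b \<cdot>\<^sub>v v + M *\<^sub>v y)) $ i"
    using M c i by (simp add: ring_distribs add_ac)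
qed (use M c in simp)

lemma vec_lin2: fixes M :: "'a::comm_ring_1 mat" assumes M: "M \<in> carrier_mat n n" and c: "v \<in> carrier_vec n" "x \<in> carrier_vec n"
  shows "(c * a) \<cdot>\<^sub>v v + M *\<^sub>v (c \<cdot>\<^sub>v x) = c \<cdot>\<^sub>v (a \<cdot>\<^sub>v v + M *\<^sub>v x)"
proof (rule eq_vecI)
  fix i assume "i < dim_vec (c \<cdot>\<^sub>v (a \<cdot>\<^sub>v v + M *\<^sub>v x))"
  hence i: "i < n" using M c by simp
  have "row M i \<bullet> (c \<cdot>\<^sub>v x) = c * (row M i \<bullet> x)"
    by (rule scalar_prod_smult_right) (use M c in simp)
  thus "((c * a) \<cdot>\<^sub>v v + M *\<^sub>v (c \<cdot>\<^sub>v x)) $ i = (c \<cdot>\<^sub>v (a \<cdot>\<^sub>v v + M *\<^sub>v x)) $ i"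
    using M c i by (simp add: ring_distribs add_ac)
qed (use M c in simp)

context
  fixes M :: "'a::comm_ring_1 mat" and n :: nat
  assumes M: "M \<in> carrier_mat n n"
begin

lemma dimM[simp]: "dim_row M = n" "dim_col M = n" using M by auto

lemma M_zero[simp]: "M *\<^sub>v 0\<^sub>v n = 0\<^sub>v n"
  by (intro eq_vecI) (auto simp: scalar_prod_def)

lemma rowM_add: "i < n \<Longrightarrow> x \<in> carrier_vec n \<Longrightarrow> y \<in> carrier_vec n \<Longrightarrow>
   row M i \<bullet> (x + y) = row M i \<bullet> x + row M i \<bullet> y"
  by (rule scalar_prod_add_distrib[OF rowM_carrier[OF M]])

lemma rowM_smult: "i < n \<Longrightarrow> x \<in> carrier_vec n \<Longrightarrow>
   row M i \<bullet> (c \<cdot>\<^sub>v x) = c * (row M i \<bullet> x)"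
  by (rule scalar_prod_smult_right) auto

lemma pev_0[simp]: "pev M 0 v = 0\<^sub>v n"
  using M unfolding pev_def by simp

lemma pev_pCons: assumes v: "v \<in> carrier_vec n"
  shows "pev M (pCons a p) v = a \<cdot>\<^sub>v v + M *\<^sub>v pev M p v"
proof (cases "a = 0 \<and> p = 0")
  case True
  then show ?thesis using M v by (auto intro!: eq_vecI simp: pev_def)
next
  case False
  then show ?thesis unfolding pev_def by (auto simp: fold_coeffs_pCons_coeff_not_0_eq fold_coeffs_pCons_not_0_0_eq)
qed

lemma pev_carrier[simp]: assumes v: "v \<in> carrier_vec n"
  shows "pev M p v \<in> carrier_vec n"
  by (induct p) (use M v in \<open>auto simp: pev_pCons\<close>)

lemma pev_add_v: assumes v: "v \<in> carrier_vec n" and w: "w \<in> carrier_vec n"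
  shows "pev M p (v + w) = pev M p v + pev M p w"
proof (induct p)
  case 0 then show ?case using M by simp
next
  case (pCons a p)
  have "pev M (pCons a p) (v + w) = a \<cdot>\<^sub>v (v + w) + M *\<^sub>v (pev M p v + pev M p w)"
    using v w pCons by (simp add: pev_pCons)
  also have "\<dots> = (a \<cdot>\<^sub>v v + M *\<^sub>v pev M p v) + (a \<cdot>\<^sub>v w + M *\<^sub>v pev M p w)"
    using M v w by (intro vec_lin1) auto
  finally show ?case using v w by (simp add: pev_pCons)
qed

lemma pev_smult_v: assumes v: "v \<in> carrier_vec n"
  shows "pev M p (c \<cdot>\<^sub>v v) = c \<cdot>\<^sub>v pev M p v"
proof (induct p)
  case 0 then show ?case using M by (auto intro!: eq_vecI)
next
  case (pCons a p)
  have "pev M (pCons a p) (c \<cdot>\<^sub>v v) = (c * a) \<cdot>\<^sub>v v + M *\<^sub>v (c \<cdot>\<^sub>v pev M p v)"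
    using v pCons by (simp add: pev_pCons smult_smult_assoc mult.commute)
  also have "\<dots> = c \<cdot>\<^sub>v (a \<cdot>\<^sub>v v + M *\<^sub>v pev M p v)"
    using M v by (intro vec_lin2) auto
  finally show ?case using v by (simp add: pev_pCons)
qed

lemma pev_add: assumes v: "v \<in> carrier_vec n"
  shows "pev M (p + q) v = pev M p v + pev M q v"
proof (induct p q rule: poly_induct2)
  case 0 then show ?case using M by simp
next
  case (pCons a p b q)
  have "pev M (pCons a p + pCons b q) v = (a + b) \<cdot>\<^sub>v v + M *\<^sub>v (pev M p v + pev M q v)"
    using v pCons by (simp add: pev_pCons)
  also have "\<dots> = (a \<cdot>\<^sub>v v + M *\<^sub>v pev M p v) + (b \<cdot>\<^sub>v v + M *\<^sub>v pev M q v)"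
    using M v by (intro vec_lin3) auto
  finally show ?case using v by (simp add: pev_pCons)
qed

lemma pev_smult: assumes v: "v \<in> carrier_vec n"
  shows "pev M (Polynomial.smult c p) v = c \<cdot>\<^sub>v pev M p v"
proof (induct p)
  case 0 then show ?case using M by (auto intro!: eq_vecI)
next
  case (pCons a p)
  have "pev M (Polynomial.smult c (pCons a p)) v = (c * a) \<cdot>\<^sub>v v + M *\<^sub>v (c \<cdot>\<^sub>v pev M p v)"
    using v pCons by (simp add: pev_pCons)
  also have "\<dots> = c \<cdot>\<^sub>v (a \<cdot>\<^sub>v v + M *\<^sub>v pev M p v)"
    using M v by (intro vec_lin2) auto
  finally show ?case using v by (simp add: pev_pCons)
qed

lemma pev_mult: assumes v: "v \<in> carrier_vec n"
  shows "pev M (p * q) v = pev M p (pev M q v)"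
proof (induct p)
  case 0 then show ?case using M by simp
next
  case (pCons a p)
  have "pev M (pCons a p * q) v = pev M (Polynomial.smult a q) v + pev M (pCons 0 (p * q)) v"
    using v by (simp add: pev_add)
  also have "\<dots> = a \<cdot>\<^sub>v pev M q v + (0 \<cdot>\<^sub>v v + M *\<^sub>v pev M p (pev M q v))"
    using v pCons by (simp add: pev_smult pev_pCons)
  also have "\<dots> = pev M (pCons a p) (pev M q v)"
    using M v by (subst pev_pCons) (auto intro!: eq_vecI)
  finally show ?case .
qed

lemma pev_const: assumes v: "v \<in> carrier_vec n"
  shows "pev M [:c:] v = c \<cdot>\<^sub>v v"
  using M v by (auto intro!: eq_vecI simp: pev_pCons)

lemma pev_X: assumes v: "v \<in> carrier_vec n"
  shows "pev M [:0,1:] v = M *\<^sub>v v"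
  using M v by (auto intro!: eq_vecI simp: pev_pCons pev_const)

lemma pev_X_pow: "v \<in> carrier_vec n \<Longrightarrow> pev M ([:0,1:] ^ k) v = (M ^\<^sub>m k) *\<^sub>v v"
proof (induct k arbitrary: v)
  case (0 v) then show ?case using M pev_const[OF 0, of 1] by (simp add: one_pCons)
next
  case (Suc k v)
  note v = Suc(2)
  have "pev M ([:0,1:] ^ Suc k) v = pev M ([:0,1:] ^ k) (pev M [:0,1:] v)"
    by (simp only: power_Suc2 pev_mult[OF v])
  also have "\<dots> = (M ^\<^sub>m k) *\<^sub>v (M *\<^sub>v v)" using M v Suc(1)[of "M *\<^sub>v v"] pev_X[OF v] by auto
  also have "\<dots> = (M ^\<^sub>m k * M) *\<^sub>v v"
    by (rule assoc_mult_mat_vec[symmetric, of _ n n _ n]) (use M v in simp_all)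
  also have "\<dots> = (M ^\<^sub>m Suc k) *\<^sub>v v" by simp
  finally show ?case .
qed

lemma pev_diff: assumes v: "v \<in> carrier_vec n"
  shows "pev M (p - q) v = pev M p v - pev M q v"
proof -
  have "p - q = p + Polynomial.smult (-1) q" by simp
  hence "pev M (p - q) v = pev M p v + (-1) \<cdot>\<^sub>v pev M q v"
    using v by (simp only: pev_add pev_smult)
  also have "\<dots> = pev M p v - pev M q v" using v by (intro eq_vecI) auto
  finally show ?thesis .
qed

end

lemma mat_eq_by_vec:
  fixes A B :: "'a::comm_ring_1 mat"
  assumes A: "A \<in> carrier_mat n n" and B: "B \<in> carrier_mat n n"
  and eq: "\<And>v. v \<in> carrier_vec n \<Longrightarrow> A *\<^sub>v v = B *\<^sub>v v"
  shows "A = B"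
proof (rule eq_matI)
  fix i j assume i: "i < dim_row B" and j: "j < dim_col B"
  have ij: "i < n" "j < n" using i j B by auto
  have dA: "dim_row A = n" "dim_col A = n" using A by auto
  have dB: "dim_row B = n" "dim_col B = n" using B by auto
  have "A $$ (i,j) = (A *\<^sub>v unit_vec n j) $ i"
    using ij dA by (simp add: scalar_prod_right_unit)
  also have "\<dots> = (B *\<^sub>v unit_vec n j) $ i" using eq[of "unit_vec n j"] by simp
  also have "\<dots> = B $$ (i,j)" using ij dB by (simp add: scalar_prod_right_unit)
  finally show "A $$ (i,j) = B $$ (i,j)" .
next
  show "dim_row A = dim_row B" using A B by simp
next
  show "dim_col A = dim_col B" using A B by simp
qed

lemma smult_one_mat_vec:
  assumes v: "(v :: 'a::comm_ring_1 vec) \<in> carrier_vec n"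
  shows "(a \<cdot>\<^sub>m 1\<^sub>m n) *\<^sub>v v = a \<cdot>\<^sub>v v"
proof (rule eq_vecI)
  fix i assume "i < dim_vec (a \<cdot>\<^sub>v v)" hence i: "i < n" using v by simp
  have dv: "dim_vec v = n" using v by simp
  have "((a \<cdot>\<^sub>m 1\<^sub>m n) *\<^sub>v v) $ i = row (a \<cdot>\<^sub>m 1\<^sub>m n) i \<bullet> v" using i by simp
  also have "\<dots> = (a \<cdot>\<^sub>v row (1\<^sub>m n) i) \<bullet> v" using i by (simp add: row_smult)
  also have "\<dots> = a * (row (1\<^sub>m n) i \<bullet> v)" using dv i by (simp add: scalar_prod_smult_left)
  also have "row (1\<^sub>m n) i \<bullet> v = (1\<^sub>m n *\<^sub>v v) $ i" using i by simp
  also have "\<dots> = v $ i" using v by simp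
  finally show "((a \<cdot>\<^sub>m 1\<^sub>m n) *\<^sub>v v) $ i = (a \<cdot>\<^sub>v v) $ i" using i dv by simp
qed (use v in simp)

lemma distinct_roots_dvd:
  fixes h :: "'a::field poly"
  shows "(\<forall>c. count B c \<le> 1) \<Longrightarrow> (\<forall>c\<in>#B. poly h c = 0) \<Longrightarrow> (\<Prod>c\<in>#B. [:-c,1:]) dvd h"
proof (induct B arbitrary: h)
  case empty then show ?case by simp
next
  case (add c B)
  have "poly h c = 0" using add.prems by simp
  then obtain h' where h: "h = [:-c,1:] * h'" using poly_eq_0_iff_dvd by (metis dvdE)
  have "count (add_mset c B) c \<le> 1" using add.prems(1) by blast
  hence cB: "c \<notin># B" by (simp add: count_eq_zero_iff[symmetric])
  have cnt: "\<forall>d. count B d \<le> 1"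
  proof
    fix d
    have "count (add_mset c B) d \<le> 1" using add.prems(1) by blast
    thus "count B d \<le> 1" by (simp split: if_splits)
  qed
  have "\<forall>d\<in>#B. poly h' d = 0"
  proof
    fix d assume d: "d \<in># B"
    hence dc: "d \<noteq> c" using cB by auto
    have "poly h d = 0" using add.prems(2) d by simp
    hence "(d - c) * poly h' d = 0" using h by (simp add: algebra_simps)
    thus "poly h' d = 0" using dc by simp
  qed
  from add.hyps[OF cnt this] have "(\<Prod>c\<in>#B. [:-c,1:]) dvd h'" .
  hence "[:-c,1:] * (\<Prod>c\<in>#B. [:-c,1:]) dvd [:-c,1:] * h'" by (rule mult_dvd_mono[OF dvd_refl])
  thus ?case using h by simp
qed

lemma pev_zero_vec:
  assumes M: "(M :: 'a::comm_ring_1 mat) \<in> carrier_mat n n"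
  shows "pev M p (0\<^sub>v n) = 0\<^sub>v n"
proof -
  have z: "0\<^sub>v n = (0::'a) \<cdot>\<^sub>v 0\<^sub>v n" by (intro eq_vecI) auto
  have "pev M p (0\<^sub>v n) = (0::'a) \<cdot>\<^sub>v pev M p (0\<^sub>v n)"
    by (subst z, rule pev_smult_v[OF M]) simp
  also have "\<dots> = 0\<^sub>v n" using pev_carrier[OF M, of "0\<^sub>v n" p] by (intro eq_vecI) auto
  finally show ?thesis .
qed

lemma prod_no_ev_inj:
  fixes M :: "'a::field mat"
  assumes M: "M \<in> carrier_mat n n"
  shows "(\<forall>c\<in>#B. \<not> eigenvalue M c) \<Longrightarrow> w \<in> carrier_vec n \<Longrightarrow>
         pev M (\<Prod>c\<in>#B. [:-c,1:]) w = 0\<^sub>v n \<Longrightarrow> w = 0\<^sub>v n"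
proof (induct B arbitrary: w)
  case empty
  have "pev M 1 w = w" using pev_const[OF M empty.prems(2), of 1] empty.prems(2) by (simp add: one_pCons)
  thus ?case using empty.prems by simp
next
  case (add c B)
  define u where "u = pev M (\<Prod>c\<in>#B. [:-c,1:]) w"
  have u: "u \<in> carrier_vec n" using pev_carrier[OF M add.prems(2)] u_def by simp
  have "pev M (\<Prod>c\<in>#add_mset c B. [:-c,1:]) w = pev M [:-c,1:] u"
    unfolding u_def image_mset_add_mset prod_mset.add_mset by (rule pev_mult[OF M add.prems(2)])
  also have "\<dots> = (-c) \<cdot>\<^sub>v u + M *\<^sub>v u"
    using pev_pCons[OF M u, of "-c" "[:1:]"] pev_const[OF M u, of 1] u by simp
  finally have z: "(-c) \<cdot>\<^sub>v u + M *\<^sub>v u = 0\<^sub>v n" using add.prems(3) by simp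
  have "u = 0\<^sub>v n"
  proof (rule ccontr)
    assume nz: "u \<noteq> 0\<^sub>v n"
    have "M *\<^sub>v u = c \<cdot>\<^sub>v u"
    proof (rule eq_vecI)
      fix i assume "i < dim_vec (c \<cdot>\<^sub>v u)" hence i: "i < n" using u by simp
      have "((-c) \<cdot>\<^sub>v u + M *\<^sub>v u) $ i = 0" using z i by simp
      moreover have "((-c) \<cdot>\<^sub>v u + M *\<^sub>v u) $ i = (M *\<^sub>v u) $ i - c * u $ i"
        using i u M by simp
      ultimately show "(M *\<^sub>v u) $ i = (c \<cdot>\<^sub>v u) $ i" using i u by simp
    qed (use M u in simp)
    hence "eigenvector M u c" unfolding eigenvector_def using M u nz by simp
    hence "eigenvalue M c" unfolding eigenvalue_def by blast
    thus False using add.prems(1) by simp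
  qed
  thus ?case using add.hyps[of w] add.prems u_def by simp
qed

lemma key_scalar_power:
  fixes M :: "'k::alg_closed_field mat"
  assumes M: "M \<in> carrier_mat n n" and r: "r > 0" and rk: "of_nat r \<noteq> (0::'k)"
    and Mr: "M ^\<^sub>m r = lam \<cdot>\<^sub>m 1\<^sub>m n" and lam: "lam \<noteq> 0"
    and ev: "\<And>\<gamma>. eigenvalue M \<gamma> \<Longrightarrow> \<gamma> ^ m = mu"
  shows "M ^\<^sub>m m = mu \<cdot>\<^sub>m 1\<^sub>m n"
proof -
  define X :: "'k poly" where "X = [:0,1:]"
  define P where "P = X ^ r - [:lam:]"
  define h where "h = X ^ m - [:mu:]"
  have polyP: "poly P c = c ^ r - lam" for c by (simp add: P_def X_def)
  have polyh: "poly h c = c ^ m - mu" for c by (simp add: h_def X_def)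
  have P0: "P \<noteq> 0"
  proof
    assume "P = 0" hence "poly P 0 = 0" by simp
    thus False using r lam polyP[of 0] by (simp add: zero_power)
  qed
  obtain A where A: "P = Polynomial.smult (lead_coeff P) (\<Prod>x\<in>#A. [:-x,1:])"
    using alg_closed_imp_factorization[OF P0] by blast
  define lc where "lc = lead_coeff P"
  have lc: "lc \<noteq> 0" using P0 lc_def by simp
  have pderivP: "poly (pderiv P) c = of_nat r * c ^ (r - 1)" for c
  proof -
    obtain r' where r': "r = Suc r'" using r by (cases r) auto
    have "pderiv P = Polynomial.smult (of_nat r) (X ^ r')"
      unfolding P_def r' pderiv_diff pderiv_power_Suc by (simp add: X_def pderiv_pCons)
    thus ?thesis by (simp add: r' X_def)
  qed
  have dist: "count A c \<le> 1" for c
  proof (rule ccontr)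
    assume "\<not> count A c \<le> 1"
    hence c2: "count A c \<ge> 2" by simp
    hence "0 < count A c" by linarith
    hence "c \<in># A" by (simp only: count_greater_zero_iff)
    then obtain A' where A': "A = add_mset c A'" by (metis multi_member_split)
    hence "c \<in># A'" using c2 by simp
    then obtain B where B: "A' = add_mset c B" by (metis multi_member_split)
    define T where "T = Polynomial.smult lc (\<Prod>x\<in>#B. [:-x,1:])"
    have prodA: "(\<Prod>x\<in>#A. [:-x,1:]) = [:-c,1:] ^ Suc 1 * (\<Prod>x\<in>#B. [:-x,1:])"
      unfolding A' B image_mset_add_mset prod_mset.add_mset by (simp only: power_Suc power_one_right mult.assoc)
    have PT: "P = [:-c,1:] ^ Suc 1 * T"
      unfolding T_def using A[folded lc_def] prodA by (simp only: mult_smult_right)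
    have "poly (pderiv P) c = 0"
      unfolding PT lemma_order_pderiv1 by simp
    moreover have "poly P c = 0" unfolding PT by simp
    hence "c ^ r = lam" using polyP by simp
    hence "c \<noteq> 0" using lam r by auto
    ultimately show False using pderivP[of c] rk by simp
  qed
  define A1 where "A1 = filter_mset (\<lambda>c. poly h c = 0) A"
  define A2 where "A2 = filter_mset (\<lambda>c. \<not> poly h c = 0) A"
  define G where "G = (\<Prod>x\<in>#A1. [:-x,1:])"
  define Q where "Q = (\<Prod>x\<in>#A2. [:-x,1:])"
  have PQG: "P = Polynomial.smult lc (Q * G)"
  proof -
    have "A = A1 + A2" unfolding A1_def A2_def by (rule multiset_partition)
    hence "(\<Prod>x\<in>#A. [:-x,1:]) = G * Q" unfolding G_def Q_def by simp
    thus ?thesis using A lc_def by (simp add: mult.commute)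
  qed
  have Gh: "G dvd h" unfolding G_def
  proof (rule distinct_roots_dvd)
    show "\<forall>c. count A1 c \<le> 1" using dist unfolding A1_def by simp
    show "\<forall>c\<in>#A1. poly h c = 0" unfolding A1_def by simp
  qed
  then obtain k where hk: "h = G * k" by (elim dvdE)
  have A2ev: "\<forall>c\<in>#A2. \<not> eigenvalue M c"
  proof
    fix c assume "c \<in># A2"
    hence "poly h c \<noteq> 0" unfolding A2_def by simp
    thus "\<not> eigenvalue M c" using ev[of c] polyh[of c] by auto
  qed
  have vec: "M ^\<^sub>m m *\<^sub>v v = (mu \<cdot>\<^sub>m 1\<^sub>m n) *\<^sub>v v" if v: "v \<in> carrier_vec n" for v
  proof -
    have "pev M P v = (M ^\<^sub>m r) *\<^sub>v v - lam \<cdot>\<^sub>v v"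
      unfolding P_def X_def using pev_diff[OF M v] pev_X_pow[OF M v] pev_const[OF M v] by simp
    also have "\<dots> = 0\<^sub>v n" unfolding Mr smult_one_mat_vec[OF v] using v by simp
    finally have P0v: "pev M P v = 0\<^sub>v n" .
    have Gv: "pev M G v \<in> carrier_vec n" using pev_carrier[OF M v] by simp
    have "pev M P v = lc \<cdot>\<^sub>v pev M Q (pev M G v)"
      unfolding PQG using pev_smult[OF M v] pev_mult[OF M v] by simp
    hence "lc \<cdot>\<^sub>v pev M Q (pev M G v) = 0\<^sub>v n" using P0v by simp
    moreover have "inverse lc \<cdot>\<^sub>v 0\<^sub>v n = 0\<^sub>v n" by (intro eq_vecI) auto
    ultimately have "inverse lc \<cdot>\<^sub>v (lc \<cdot>\<^sub>v pev M Q (pev M G v)) = 0\<^sub>v n" by simp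
    hence "pev M Q (pev M G v) = 0\<^sub>v n" using lc pev_carrier[OF M Gv, of Q] by (simp add: smult_smult_assoc)
    hence G0: "pev M G v = 0\<^sub>v n"
      using prod_no_ev_inj[OF M A2ev Gv] unfolding Q_def by simp
    have "pev M h v = pev M k (pev M G v)" unfolding hk by (subst mult.commute) (rule pev_mult[OF M v])
    also have "\<dots> = 0\<^sub>v n" unfolding G0 by (rule pev_zero_vec[OF M])
    finally have "pev M h v = 0\<^sub>v n" .
    moreover have "pev M h v = (M ^\<^sub>m m) *\<^sub>v v - mu \<cdot>\<^sub>v v"
      unfolding h_def X_def using pev_diff[OF M v] pev_X_pow[OF M v] pev_const[OF M v] by simp
    ultimately have "(M ^\<^sub>m m) *\<^sub>v v - mu \<cdot>\<^sub>v v = 0\<^sub>v n" by simp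
    hence "(M ^\<^sub>m m) *\<^sub>v v = mu \<cdot>\<^sub>v v"
    proof -
      assume z: "(M ^\<^sub>m m) *\<^sub>v v - mu \<cdot>\<^sub>v v = 0\<^sub>v n"
      show ?thesis
      proof (rule eq_vecI)
        fix i assume "i < dim_vec (mu \<cdot>\<^sub>v v)" hence i: "i < n" using v by simp
        have "((M ^\<^sub>m m) *\<^sub>v v - mu \<cdot>\<^sub>v v) $ i = 0" using z i by simp
        thus "((M ^\<^sub>m m) *\<^sub>v v) $ i = (mu \<cdot>\<^sub>v v) $ i" using i v M by simp
      qed (use M v in simp)
    qed
    thus ?thesis using smult_one_mat_vec[OF v] by simp
  qed
  show ?thesis by (rule mat_eq_by_vec[OF _ _ vec]) (use M in auto)
qed

lemma finite_carrier_mat_finite: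
  "finite (carrier_mat n m :: 'a::finite mat set)"
proof -
  let ?I = "{0..<n} \<times> {0..<m}"
  have "carrier_mat n m \<subseteq> (\<lambda>f. mat n m f) ` (PiE ?I (\<lambda>_. (UNIV :: 'a set)))"
  proof
    fix A :: "'a mat" assume A: "A \<in> carrier_mat n m"
    have "A = mat n m (restrict (\<lambda>ij. A $$ ij) ?I)"
      using A by (intro eq_matI) auto
    moreover have "restrict (\<lambda>ij. A $$ ij) ?I \<in> PiE ?I (\<lambda>_. UNIV)" by simp
    ultimately show "A \<in> (\<lambda>f. mat n m f) ` (PiE ?I (\<lambda>_. (UNIV :: 'a set)))" by blast
  qed
  moreover have "finite (PiE ?I (\<lambda>_. (UNIV :: 'a set)))" by (intro finite_PiE) auto
  ultimately show ?thesis using finite_subset by blast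
qed

lemma exists_pow_one:
  fixes F :: "'a::{field,finite} mat"
  assumes F: "F \<in> carrier_mat n n" and dF: "det F \<noteq> 0"
  shows "\<exists>d>0. F ^\<^sub>m d = 1\<^sub>m n"
proof -
  let ?R = "ring_mat TYPE('a) n ()"
  interpret R: ring ?R by (rule ring_mat)
  have U: "F \<in> Units ?R" by (rule det_non_zero_imp_unit[OF F dF])
  have Fc: "F \<in> carrier ?R" using F by (simp add: ring_mat_simps)
  have UP: "F [^]\<^bsub>?R\<^esub> k \<in> Units ?R" for k :: nat
  proof (induct k)
    case 0 show ?case by (simp only: R.nat_pow_0 R.Units_one_closed)
  next
    case (Suc k) show ?case unfolding R.nat_pow_Suc by (rule R.Units_m_closed[OF Suc U])
  qed
  have "\<not> inj (\<lambda>k::nat. F ^\<^sub>m k)"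
  proof
    assume inj: "inj (\<lambda>k::nat. F ^\<^sub>m k)"
    have "range (\<lambda>k::nat. F ^\<^sub>m k) \<subseteq> carrier_mat n n" using F by auto
    hence "finite (range (\<lambda>k::nat. F ^\<^sub>m k))"
      using finite_carrier_mat_finite finite_subset by blast
    hence "finite (UNIV :: nat set)" using finite_imageD[OF _ inj] by blast
    thus False by simp
  qed
  then obtain i j where ij: "i \<noteq> j" "F ^\<^sub>m i = F ^\<^sub>m j" unfolding inj_def by blast
  obtain a b where ab: "a < b" "F ^\<^sub>m a = F ^\<^sub>m b"
  proof (cases "i < j")
    case True thus ?thesis using that ij by blast
  next
    case False hence "j < i" using ij by simp
    thus ?thesis using that ij by metis
  qed
  have pw: "F ^\<^sub>m k = F [^]\<^bsub>?R\<^esub> k" for k by (rule pow_mat_ring_pow[OF F])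
  have "F [^]\<^bsub>?R\<^esub> a \<otimes>\<^bsub>?R\<^esub> F [^]\<^bsub>?R\<^esub> (b - a) = F [^]\<^bsub>?R\<^esub> b"
    using R.nat_pow_mult[OF Fc, of a "b - a"] ab by simp
  also have "\<dots> = F [^]\<^bsub>?R\<^esub> a" using ab pw by simp
  also have "\<dots> = F [^]\<^bsub>?R\<^esub> a \<otimes>\<^bsub>?R\<^esub> \<one>\<^bsub>?R\<^esub>" using Fc by simp
  finally have eq: "F [^]\<^bsub>?R\<^esub> a \<otimes>\<^bsub>?R\<^esub> F [^]\<^bsub>?R\<^esub> (b - a) = F [^]\<^bsub>?R\<^esub> a \<otimes>\<^bsub>?R\<^esub> \<one>\<^bsub>?R\<^esub>" .
  have "F [^]\<^bsub>?R\<^esub> (b - a) = \<one>\<^bsub>?R\<^esub>"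
    using eq R.Units_l_cancel[OF UP[of a] R.nat_pow_closed[OF Fc] R.one_closed] by blast
  hence "F ^\<^sub>m (b - a) = 1\<^sub>m n" using pw by (simp add: ring_mat_simps)
  thus ?thesis using ab by (intro exI[of _ "b - a"]) simp
qed

lemma smult_vec_cancel:
  assumes v: "v \<in> carrier_vec n" "v \<noteq> 0\<^sub>v n" and eq: "a \<cdot>\<^sub>v v = (b::'a::field) \<cdot>\<^sub>v v"
  shows "a = b"
proof -
  obtain i where i: "i < n" "v $ i \<noteq> 0"
  proof (rule ccontr)
    assume "\<not> thesis"
    hence "\<forall>i<n. v $ i = 0" using that by blast
    hence "v = 0\<^sub>v n" using v(1) by (intro eq_vecI) auto
    thus False using v(2) by simp
  qed
  have "(a \<cdot>\<^sub>v v) $ i = (b \<cdot>\<^sub>v v) $ i" using eq by simp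
  hence "a * v $ i = b * v $ i" using i v by simp
  thus ?thesis using i by simp
qed

lemma eigenvalue_pow_scalar:
  fixes M :: "'a::field mat"
  assumes M: "M \<in> carrier_mat n n" and Mr: "M ^\<^sub>m r = lam \<cdot>\<^sub>m 1\<^sub>m n" and ev: "eigenvalue M g"
  shows "g ^ r = lam"
proof -
  obtain v where v: "eigenvector M v g" using ev unfolding eigenvalue_def by blast
  have dM: "dim_row M = n" using M by simp
  have vc: "v \<in> carrier_vec n" "v \<noteq> 0\<^sub>v n" using v[unfolded eigenvector_def dM] by blast+
  have "g ^ r \<cdot>\<^sub>v v = M ^\<^sub>m r *\<^sub>v v" using eigenvector_pow[OF M v] by simp
  also have "\<dots> = lam \<cdot>\<^sub>v v" unfolding Mr by (rule smult_one_mat_vec[OF vc(1)])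
  finally show ?thesis by (rule smult_vec_cancel[OF vc])
qed

lemma elt_ord_props:
  fixes x :: "'a::field"
  assumes "x ^ m = 1" "m > 0"
  shows "elt_ord x > 0" "x ^ elt_ord x = 1" "elt_ord x dvd m"
proof -
  have ex: "\<exists>k. k > 0 \<and> x ^ k = 1" using assms by blast
  have P: "elt_ord x > 0 \<and> x ^ elt_ord x = 1" unfolding elt_ord_def by (rule LeastI_ex[OF ex])
  thus "elt_ord x > 0" "x ^ elt_ord x = 1" by auto
  show "elt_ord x dvd m"
  proof (rule ccontr)
    assume nd: "\<not> elt_ord x dvd m"
    let ?e = "elt_ord x"
    have pos: "m mod ?e > 0" using nd by (simp add: dvd_eq_mod_eq_0)
    have me: "m = ?e * (m div ?e) + m mod ?e" by simp
    have "x ^ m = (x ^ ?e) ^ (m div ?e) * x ^ (m mod ?e)"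
      by (subst me) (simp only: power_add power_mult)
    hence "x ^ (m mod ?e) = 1" using P assms by simp
    hence "?e \<le> m mod ?e" using pos unfolding elt_ord_def by (intro Least_le) simp
    moreover have "m mod ?e < ?e" using P by simp
    ultimately show False by simp
  qed
qed

lemma elt_ord_pow:
  fixes x :: "'a::field"
  assumes "x ^ m = 1" "m > 0" "elt_ord x dvd k"
  shows "x ^ k = 1"
proof -
  obtain t where "k = elt_ord x * t" using assms(3) by (elim dvdE)
  thus ?thesis using elt_ord_props(2)[OF assms(1,2)] by (simp add: power_mult)
qed

lemma poly_frob:
  "poly (map_poly of_int (frob_poly Q a1 a2)) (x :: 'a::comm_ring_1) =
     of_int Q ^ 2 + of_int a1 * of_int Q * x + of_int a2 * x ^ 2 + of_int a1 * x ^ 3 + x ^ 4"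
  by (simp add: frob_poly_def map_poly_pCons algebra_simps power2_eq_square power3_eq_cube power4_eq_xxxx)

lemma quad_root:
  "\<exists>x::'a::alg_closed_field. x ^ 2 + b * x + c = 0"
proof -
  have "degree [:c, b, 1:] > 0" by simp
  then obtain x where "poly [:c, b, 1:] (x::'a) = 0" using alg_closed_imp_poly_has_root by blast
  thus ?thesis by (intro exI[of _ x]) (simp add: algebra_simps power2_eq_square)
qed

theorem proposition2:
  fixes p n :: nat and a1 a2 :: int and l :: nat
    and F :: "'f::{field,finite} mat"
  assumes p_prime: "prime p" and n_pos: "n \<ge> 1"
    and weil: "\<And>z::complex. poly (map_poly of_int (frob_poly (int (p ^ n)) a1 a2)) z = 0
                 \<Longrightarrow> cmod z = sqrt (real (p ^ n))"
    and l_prime: "prime l" and l_ne_p: "l \<noteq> p"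
    and card_f: "card (UNIV :: 'f set) = l"
    and F_dim: "F \<in> carrier_mat 4 4"
    and F_charpoly: "char_poly F = map_poly of_int (frob_poly (int (p ^ n)) a1 a2)"
    and char_k: "CHAR('k) = l"
    and coprime_lr: "coprime l (pgl_order F)"
  shows "\<exists>\<zeta>1 \<zeta>2 :: 'k::alg_closed_field.
           \<zeta>1 ^ pgl_order F = 1 \<and> \<zeta>2 ^ pgl_order F = 1 \<and>
           (if odd (pgl_order F)
            then lcm (elt_ord \<zeta>1) (elt_ord \<zeta>2) = pgl_order F
            else lcm (elt_ord \<zeta>1) (elt_ord \<zeta>2) \<in> {pgl_order F, pgl_order F div 2}) \<and>
           (let \<eta>1 = \<zeta>1 + inverse \<zeta>1 + 2; \<eta>2 = \<zeta>2 + inverse \<zeta>2 + 2 in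
             (\<exists>u1 u2 :: 'k. u1 ^ 2 = \<eta>1 \<and> u2 ^ 2 = \<eta>2 \<and>
                 of_int (a1 ^ 2) = (u1 + u2) ^ 2 * of_nat (p ^ n)) \<and>
             of_int ((a2 - 2 * int (p ^ n)) ^ 2) = \<eta>1 * \<eta>2 * of_nat (p ^ n) ^ 2)"
proof -
  define q where "q = p ^ n"
  define r where "r = pgl_order F"
  define fp where "fp = frob_poly (int q) a1 a2"
  interpret h: field_hom "prim_hom :: 'f \<Rightarrow> 'k" by (rule prim_hom_field_hom[OF l_prime card_f char_k])
  define M where "M = map_mat (prim_hom :: 'f \<Rightarrow> 'k) F"
  have M: "M \<in> carrier_mat 4 4" using F_dim M_def by simp
  have dF: "dim_row F = 4" using F_dim by simp
  have Cf: "CHAR('f) = l" by (rule CHAR_finite_prime_card[OF l_prime card_f])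
  have l1: "l \<noteq> 1" using l_prime by auto
  have ql: "\<not> l dvd q"
  proof
    assume "l dvd q"
    hence "l dvd p" unfolding q_def using l_prime prime_dvd_power by blast
    hence "l = 1 \<or> l = p" using p_prime unfolding prime_nat_iff by blast
    thus False using l1 l_ne_p by blast
  qed
  have qk: "(of_nat q :: 'k) \<noteq> 0" using ql by (simp add: of_nat_eq_0_iff_char_dvd char_k)
  have qf: "(of_nat q :: 'f) \<noteq> 0" using ql by (simp add: of_nat_eq_0_iff_char_dvd Cf)
  have "poly (char_poly F) 0 = (of_nat q :: 'f) ^ 2"
    unfolding F_charpoly fp_def[symmetric, unfolded q_def] q_def[symmetric] fp_def poly_frob by simp
  hence c0: "poly (char_poly F) 0 \<noteq> 0" using qf by simp
  have cm: "char_matrix F 0 = F" unfolding char_matrix_def using F_dim by (intro eq_matI) auto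
  have "det (- F) \<noteq> 0" using c0 unfolding char_poly_matrix[OF F_dim] cm .
  hence detF: "det F \<noteq> 0" using det_0_negate[OF F_dim] by simp
  obtain d where d: "d > 0" "F ^\<^sub>m d = 1\<^sub>m 4" using exists_pow_one[OF F_dim detF] by blast
  define scal where "scal k \<longleftrightarrow> (\<exists>\<alpha>. F ^\<^sub>m k = \<alpha> \<cdot>\<^sub>m 1\<^sub>m 4)" for k
  have one4: "(1\<^sub>m 4 :: 'f mat) = 1 \<cdot>\<^sub>m 1\<^sub>m 4" by (intro eq_matI) auto
  have ex: "\<exists>k. k > 0 \<and> scal k" using d one4 unfolding scal_def by metis
  have rdef: "r = (LEAST k. k > 0 \<and> scal k)" unfolding r_def pgl_order_def dF scal_def ..
  have rP: "r > 0 \<and> scal r" unfolding rdef by (rule LeastI_ex[OF ex])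
  hence r_pos: "r > 0" and rscal: "scal r" by auto
  have r_min: "r \<le> k" if "k > 0" "scal k" for k unfolding rdef by (rule Least_le) (use that in simp)
  have scal_M: "\<exists>\<beta>. M ^\<^sub>m k = \<beta> \<cdot>\<^sub>m 1\<^sub>m 4" if sk: "scal k" for k
  proof -
    obtain \<alpha> where a: "F ^\<^sub>m k = \<alpha> \<cdot>\<^sub>m 1\<^sub>m 4" using sk unfolding scal_def by blast
    have "M ^\<^sub>m k = map_mat prim_hom (F ^\<^sub>m k)" unfolding M_def by (rule h.mat_hom_pow[OF F_dim, symmetric])
    also have "\<dots> = prim_hom \<alpha> \<cdot>\<^sub>m 1\<^sub>m 4" unfolding a by (intro eq_matI) (auto simp: h.hom_mult h.hom_zero h.hom_one)
    finally show ?thesis by blast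
  qed
  have M_scal: "scal k" if "M ^\<^sub>m k = \<beta> \<cdot>\<^sub>m 1\<^sub>m 4" for k \<beta>
  proof -
    define \<alpha> where "\<alpha> = (F ^\<^sub>m k) $$ (0,0)"
    have Mk: "M ^\<^sub>m k = map_mat prim_hom (F ^\<^sub>m k)" unfolding M_def by (rule h.mat_hom_pow[OF F_dim, symmetric])
    have "prim_hom \<alpha> = (M ^\<^sub>m k) $$ (0,0)" unfolding Mk \<alpha>_def using F_dim by simp
    hence ab: "prim_hom \<alpha> = \<beta>" unfolding that by simp
    have "map_mat prim_hom (F ^\<^sub>m k) = \<beta> \<cdot>\<^sub>m 1\<^sub>m 4" using Mk that by simp
    also have "\<dots> = map_mat prim_hom (\<alpha> \<cdot>\<^sub>m 1\<^sub>m 4)"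
      using ab by (intro eq_matI) (auto simp: h.hom_mult h.hom_zero h.hom_one)
    finally have "map_mat (prim_hom :: 'f \<Rightarrow> 'k) (F ^\<^sub>m k) = map_mat prim_hom (\<alpha> \<cdot>\<^sub>m 1\<^sub>m 4)" .
    hence "F ^\<^sub>m k = \<alpha> \<cdot>\<^sub>m 1\<^sub>m 4" by (rule h.mat_hom_inj)
    thus ?thesis unfolding scal_def by blast
  qed
  obtain lam where Mr: "M ^\<^sub>m r = lam \<cdot>\<^sub>m 1\<^sub>m 4" using scal_M[OF rscal] by blast
  define Q where "Q = (of_nat q :: 'k)"
  define A1 where "A1 = (of_int a1 :: 'k)"
  define A2 where "A2 = (of_int a2 :: 'k)"
  have charM: "char_poly M = map_poly of_int fp"
  proof -
    have "char_poly M = map_poly prim_hom (char_poly F)" unfolding M_def by (rule h.char_poly_hom[OF F_dim])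
    also have "\<dots> = map_poly prim_hom (map_poly (of_int :: int \<Rightarrow> 'f) fp)" unfolding F_charpoly fp_def q_def ..
    also have "\<dots> = map_poly (prim_hom \<circ> (of_int :: int \<Rightarrow> 'f)) fp" by (rule map_poly_map_poly) simp
    also have "(prim_hom :: 'f \<Rightarrow> 'k) \<circ> (of_int :: int \<Rightarrow> 'f) = (of_int :: int \<Rightarrow> 'k)"
      by (rule ext) (simp add: h.hom_of_int)
    finally show ?thesis .
  qed
  have polyM: "poly (char_poly M) x = Q ^ 2 + A1 * Q * x + A2 * x ^ 2 + A1 * x ^ 3 + x ^ 4" for x
    unfolding charM fp_def poly_frob Q_def A1_def A2_def by simp
  have evM: "eigenvalue M g \<longleftrightarrow> poly (char_poly M) g = 0" for g by (rule eigenvalue_root_char_poly[OF M])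
  obtain s1 where s1: "s1 ^ 2 + A1 * s1 + (A2 - 2 * Q) = 0" using quad_root by blast
  define s2 where "s2 = - A1 - s1"
  obtain \<alpha>1 where a1r: "\<alpha>1 ^ 2 + (- s1) * \<alpha>1 + Q = 0" using quad_root by blast
  obtain \<alpha>2 where a2r: "\<alpha>2 ^ 2 + (- s2) * \<alpha>2 + Q = 0" using quad_root by blast
  define \<beta>1 where "\<beta>1 = s1 - \<alpha>1"
  define \<beta>2 where "\<beta>2 = s2 - \<alpha>2"
  have ab1: "\<alpha>1 * \<beta>1 = Q" using a1r unfolding \<beta>1_def by (simp add: algebra_simps power2_eq_square)
  have ab2: "\<alpha>2 * \<beta>2 = Q" using a2r unfolding \<beta>2_def by (simp add: algebra_simps power2_eq_square)
  have ss1: "s1 = \<alpha>1 + \<beta>1" unfolding \<beta>1_def by simp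
  have ss2: "s2 = \<alpha>2 + \<beta>2" unfolding \<beta>2_def by simp
  have sA1: "s1 + s2 = - A1" unfolding s2_def by simp
  have sA2: "s1 * s2 = A2 - 2 * Q" using s1 unfolding s2_def by (simp add: algebra_simps power2_eq_square)
  have nz: "\<alpha>1 \<noteq> 0" "\<beta>1 \<noteq> 0" "\<alpha>2 \<noteq> 0" "\<beta>2 \<noteq> 0" using ab1 ab2 qk Q_def by auto
  have factor: "poly (char_poly M) x = (x - \<alpha>1) * (x - \<beta>1) * (x - \<alpha>2) * (x - \<beta>2)" for x
  proof -
    have f1: "(x - \<alpha>1) * (x - \<beta>1) = x ^ 2 - s1 * x + Q"
      unfolding ss1 ab1[symmetric] by (simp add: algebra_simps power2_eq_square)
    have f2: "(x - \<alpha>2) * (x - \<beta>2) = x ^ 2 - s2 * x + Q"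
      unfolding ss2 ab2[symmetric] by (simp add: algebra_simps power2_eq_square)
    have f3: "(x ^ 2 - s1 * x + Q) * (x ^ 2 - s2 * x + Q) =
      Q ^ 2 - (s1 + s2) * Q * x + (s1 * s2 + 2 * Q) * x ^ 2 - (s1 + s2) * x ^ 3 + x ^ 4"
      by (simp add: algebra_simps power2_eq_square power3_eq_cube power4_eq_xxxx numeral_eq_Suc)
    have "(x - \<alpha>1) * (x - \<beta>1) * (x - \<alpha>2) * (x - \<beta>2) = ((x - \<alpha>1) * (x - \<beta>1)) * ((x - \<alpha>2) * (x - \<beta>2))"
      by (simp add: mult.assoc)
    also have "\<dots> = Q ^ 2 - (s1 + s2) * Q * x + (s1 * s2 + 2 * Q) * x ^ 2 - (s1 + s2) * x ^ 3 + x ^ 4"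
      unfolding f1 f2 f3 ..
    also have "\<dots> = Q ^ 2 + A1 * Q * x + A2 * x ^ 2 + A1 * x ^ 3 + x ^ 4"
      unfolding sA1 sA2 by simp
    finally have "Q ^ 2 + A1 * Q * x + A2 * x ^ 2 + A1 * x ^ 3 + x ^ 4 = (x - \<alpha>1) * (x - \<beta>1) * (x - \<alpha>2) * (x - \<beta>2)" ..
    thus ?thesis unfolding polyM .
  qed
  have ev_cases: "g = \<alpha>1 \<or> g = \<beta>1 \<or> g = \<alpha>2 \<or> g = \<beta>2" if "eigenvalue M g" for g
    using that unfolding evM factor by auto
  have ev_all: "eigenvalue M \<alpha>1" "eigenvalue M \<beta>1" "eigenvalue M \<alpha>2" "eigenvalue M \<beta>2"
    unfolding evM factor by auto
  have evpow: "g ^ r = lam" if "eigenvalue M g" for g by (rule eigenvalue_pow_scalar[OF M Mr that])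
  have lam0: "lam \<noteq> 0" using evpow[OF ev_all(1)] nz(1) r_pos by auto
  define \<zeta>1 where "\<zeta>1 = \<alpha>1 / \<beta>1"
  define \<zeta>2 where "\<zeta>2 = \<alpha>2 / \<beta>2"
  have z1r: "\<zeta>1 ^ r = 1" unfolding \<zeta>1_def power_divide using evpow ev_all lam0 by simp
  have z2r: "\<zeta>2 ^ r = 1" unfolding \<zeta>2_def power_divide using evpow ev_all lam0 by simp
  define L where "L = lcm (elt_ord \<zeta>1) (elt_ord \<zeta>2)"
  have e1: "elt_ord \<zeta>1 > 0" "elt_ord \<zeta>1 dvd r" using elt_ord_props[OF z1r r_pos] by auto
  have e2: "elt_ord \<zeta>2 > 0" "elt_ord \<zeta>2 dvd r" using elt_ord_props[OF z2r r_pos] by auto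
  have Lr: "L dvd r" unfolding L_def using e1 e2 by simp
  have L0: "L > 0" unfolding L_def using e1 e2 by (simp add: lcm_pos_nat)
  have z1L: "\<zeta>1 ^ L = 1" by (rule elt_ord_pow[OF z1r r_pos]) (simp add: L_def)
  have z2L: "\<zeta>2 ^ L = 1" by (rule elt_ord_pow[OF z2r r_pos]) (simp add: L_def)
  have sq1: "\<alpha>1 ^ 2 = \<zeta>1 * Q" "\<beta>1 ^ 2 = inverse \<zeta>1 * Q"
    unfolding \<zeta>1_def ab1[symmetric] using nz by (auto simp: field_simps power2_eq_square)
  have sq2: "\<alpha>2 ^ 2 = \<zeta>2 * Q" "\<beta>2 ^ 2 = inverse \<zeta>2 * Q"
    unfolding \<zeta>2_def ab2[symmetric] using nz by (auto simp: field_simps power2_eq_square)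
  note sq = sq1 sq2
  have pw2L: "g ^ (2 * L) = Q ^ L" if "eigenvalue M g" for g
  proof -
    have "g ^ (2 * L) = (g ^ 2) ^ L" by (simp add: power_mult)
    thus ?thesis using ev_cases[OF that] sq z1L z2L
      by (auto simp: power_mult_distrib power_inverse)
  qed
  have rk: "of_nat r \<noteq> (0 :: 'k)"
  proof
    assume "of_nat r = (0 :: 'k)"
    hence "l dvd r" by (simp add: of_nat_eq_0_iff_char_dvd char_k)
    hence "l dvd 1" using coprime_lr unfolding r_def by (metis coprime_common_divisor dvd_refl)
    thus False using l1 by simp
  qed
  have M2L: "M ^\<^sub>m (2 * L) = Q ^ L \<cdot>\<^sub>m 1\<^sub>m 4"
    by (rule key_scalar_power[OF M r_pos rk Mr lam0 pw2L])
  have r2L: "r \<le> 2 * L" using r_min[OF _ M_scal[OF M2L]] L0 by simp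
  obtain t where t: "r = L * t" using Lr by (elim dvdE)
  have t0: "t > 0" using t r_pos by (cases t) auto
  have "L * t \<le> L * 2" using t r2L by (simp add: mult.commute)
  hence "t \<le> 2" using L0 by simp
  hence t12: "t = 1 \<or> t = 2" using t0 by arith
  have lcm_ok: "if odd r then L = r else L \<in> {r, r div 2}"
    using t12 t by auto
  obtain w where w: "w ^ 2 = Q" using nth_root_exists[of 2 Q] by auto
  have w0: "w \<noteq> 0" using w qk Q_def by auto
  define u1 where "u1 = s1 / w"
  define u2 where "u2 = s2 / w"
  define \<eta>1 where "\<eta>1 = \<zeta>1 + inverse \<zeta>1 + 2"
  define \<eta>2 where "\<eta>2 = \<zeta>2 + inverse \<zeta>2 + 2"
  have eta1: "\<eta>1 * Q = s1 ^ 2" unfolding \<eta>1_def \<zeta>1_def ab1[symmetric] ss1 using nz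
    by (simp add: field_simps power2_eq_square)
  have eta2: "\<eta>2 * Q = s2 ^ 2" unfolding \<eta>2_def \<zeta>2_def ab2[symmetric] ss2 using nz
    by (simp add: field_simps power2_eq_square)
  have u1s: "u1 ^ 2 = \<eta>1" unfolding u1_def power_divide w using eta1 qk Q_def by (simp add: field_simps)
  have u2s: "u2 ^ 2 = \<eta>2" unfolding u2_def power_divide w using eta2 qk Q_def by (simp add: field_simps)
  have cong1: "of_int (a1 ^ 2) = (u1 + u2) ^ 2 * Q"
  proof -
    have "(u1 + u2) ^ 2 * Q = (s1 + s2) ^ 2" unfolding u1_def u2_def w[symmetric] using w0
      by (simp add: field_simps power2_eq_square)
    thus ?thesis using sA1 A1_def by simp
  qed
  have cong2: "of_int ((a2 - 2 * int q) ^ 2) = \<eta>1 * \<eta>2 * Q ^ 2"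
  proof -
    have "\<eta>1 * \<eta>2 * Q ^ 2 = (\<eta>1 * Q) * (\<eta>2 * Q)" by (simp add: power2_eq_square)
    also have "\<dots> = (s1 * s2) ^ 2" unfolding eta1 eta2 by (simp add: power_mult_distrib)
    also have "\<dots> = (A2 - 2 * Q) ^ 2" unfolding sA2 ..
    finally show ?thesis unfolding A2_def Q_def by simp
  qed
  show ?thesis
    unfolding r_def[symmetric] Let_def
    apply (rule exI[of _ \<zeta>1], rule exI[of _ \<zeta>2])
    using z1r z2r lcm_ok u1s u2s cong1 cong2
    unfolding L_def \<eta>1_def[symmetric] \<eta>2_def[symmetric] Q_def q_def by blast
qed

end
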